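(* There is an absolute constant $C>0$ such that for every degree sequence $\mathbf d=(d_1,\ldots,d_n)$ and every $v\in[n]$, \[\mathbb P(\mathfrak t_n(v)=0)\le C\Big(d_v\,\frac{\mathbb E[\mathfrak s_n(v)]}{n}+d_v\,n\,\mathbb P(\mathfrak s_n(v)>n/2)\Big).\]
   Context: A degree sequence is $\mathbf d=(d_1,\ldots,d_n)\in\mathbb N_0^n$ with $\sum_j d_j=n$. Let $\mathfrak F(\mathbf d)=\{f:[n]\to[n]: |f^{-1}(\{i\})|=d_i\ \forall i\}$ and $F$ uniform on $\mathfrak F(\mathbf d)$. For $f:V\to V$, $v\in V$: six-length $\mathfrak s_f(v)=\min\{k\in\mathbb N: f^{(k)}(v)\in\{f^{(j)}(v):0\le j\le k-1\}\}$ ($f^{(k)}$ the $k$-fold composition, $f^{(0)}=\mathrm{id}$); tail-length $\mathfrak t_f(v)$ is the unique integer with $0\le\mathfrak t_f(v)<\mathfrak s_f(v)$ and $f^{(\mathfrak s_f(v))}(v)=f^{(\mathfrak t_f(v))}(v)$. $\mathfrak s_n(v)=\mathfrak s_F(v)$, $\mathfrak t_n(v)=\mathfrak t_F(v)$. *)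

theory Defs
  imports Complex_Main "HOL-Library.FuncSet"
begin

definition fdeg :: "nat \<Rightarrow> (nat \<Rightarrow> nat) \<Rightarrow> (nat \<Rightarrow> nat) set" where
  "fdeg n d = {f \<in> {1..n} \<rightarrow>\<^sub>E {1..n}. \<forall>i\<in>{1..n}. card {j\<in>{1..n}. f j = i} = d i}"

definition sixlen :: "('a \<Rightarrow> 'a) \<Rightarrow> 'a \<Rightarrow> nat" where
  "sixlen f v = (LEAST k. k \<ge> 1 \<and> (f ^^ k) v \<in> {(f ^^ j) v | j. j \<le> k - 1})"

definition taillen :: "('a \<Rightarrow> 'a) \<Rightarrow> 'a \<Rightarrow> nat" where
  "taillen f v = (THE t. t < sixlen f v \<and> (f ^^ sixlen f v) v = (f ^^ t) v)"

definition probF :: "nat \<Rightarrow> (nat \<Rightarrow> nat) \<Rightarrow> ((nat \<Rightarrow> nat) \<Rightarrow> bool) \<Rightarrow> real" where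
  "probF n d P = real (card {f \<in> fdeg n d. P f}) / real (card (fdeg n d))"

definition expF :: "nat \<Rightarrow> (nat \<Rightarrow> nat) \<Rightarrow> ((nat \<Rightarrow> nat) \<Rightarrow> real) \<Rightarrow> real" where
  "expF n d X = (\<Sum>f\<in>fdeg n d. X f) / real (card (fdeg n d))"

end

theory Submission
  imports Defs
begin


definition sw :: "nat \<Rightarrow> nat \<Rightarrow> nat \<Rightarrow> nat" where
  "sw a b x = (if x = a then b else if x = b then a else x)"

lemma sw_inv[simp]: "sw a b (sw a b x) = x" by (auto simp: sw_def)
lemma sw_b[simp]: "sw a b b = a" by (auto simp: sw_def)
lemma inj_sw: "inj (sw a b)" by (metis injI sw_inv)

lemma iter_in: "f ` {1..n} \<subseteq> {1..n} \<Longrightarrow> v \<in> {1..(n::nat)} \<Longrightarrow> (f^^i) v \<in> {1..n}"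
  by (induction i) (auto simp: image_subset_iff simp del: atLeastAtMost_iff)

lemma six_ex:
  assumes "f ` {1..n} \<subseteq> {1..n}" "v \<in> {1..(n::nat)}"
  shows "\<exists>k. k \<le> n \<and> k \<ge> 1 \<and> (f ^^ k) v \<in> {(f ^^ j) v | j. j \<le> k - 1}"
proof (rule ccontr)
  assume H: "\<not> ?thesis"
  have "inj_on (\<lambda>i. (f^^i) v) {0..n}"
  proof (rule inj_onI)
    fix i j assume ij: "i \<in> {0..n}" "j \<in> {0..n}" "(f^^i) v = (f^^j) v"
    show "i = j"
    proof (rule ccontr)
      assume "i \<noteq> j"
      then consider "i<j" | "j<i" by linarith
      then show False
      proof cases
        case 1
        have "(f^^j) v \<in> {(f ^^ l) v | l. l \<le> j - 1}"
          unfolding mem_Collect_eq using ij(3) 1 by (intro exI[of _ i] conjI) simp_all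
        then have "\<exists>k. k \<le> n \<and> k \<ge> 1 \<and> (f ^^ k) v \<in> {(f ^^ j) v | j. j \<le> k - 1}"
          using ij(2) 1 by (intro exI[of _ j] conjI) simp_all
        with H show False by contradiction
      next
        case 2
        have "(f^^i) v \<in> {(f ^^ l) v | l. l \<le> i - 1}"
          unfolding mem_Collect_eq using ij(3) 2 by (intro exI[of _ j] conjI) simp_all
        then have "\<exists>k. k \<le> n \<and> k \<ge> 1 \<and> (f ^^ k) v \<in> {(f ^^ j) v | j. j \<le> k - 1}"
          using ij(1) 2 by (intro exI[of _ i] conjI) simp_all
        with H show False by contradiction
      qed
    qed
  qed
  moreover have "(\<lambda>i. (f^^i) v) ` {0..n} \<subseteq> {1..n}" using iter_in assms by blast
  ultimately have "card {0..n} \<le> card {1..n}" by (intro card_inj_on_le) auto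
  then show False by simp
qed

lemma six_props:
  assumes "f ` {1..n} \<subseteq> {1..n}" "v \<in> {1..(n::nat)}"
  shows "1 \<le> sixlen f v" "sixlen f v \<le> n" "\<exists>j<sixlen f v. (f^^sixlen f v) v = (f^^j) v"
    "\<And>i j. i < j \<Longrightarrow> j < sixlen f v \<Longrightarrow> (f^^i) v \<noteq> (f^^j) v"
proof -
  let ?P = "\<lambda>k. k \<ge> 1 \<and> (f ^^ k) v \<in> {(f ^^ j) v | j. j \<le> k - 1}"
  obtain k where k: "k \<le> n" "?P k" using six_ex[OF assms] by blast
  have PS: "?P (sixlen f v)" unfolding sixlen_def by (rule LeastI[of ?P k]) (use k in auto)
  have le: "sixlen f v \<le> k" unfolding sixlen_def by (rule Least_le) (use k in auto)
  show "1 \<le> sixlen f v" using PS by auto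
  show "sixlen f v \<le> n" using le k by auto
  show "\<exists>j<sixlen f v. (f^^sixlen f v) v = (f^^j) v"
  proof -
    from PS obtain j where j: "j \<le> sixlen f v - 1" "(f^^sixlen f v) v = (f^^j) v"
      unfolding mem_Collect_eq by (elim conjE exE) simp
    have "j < sixlen f v" using j(1) PS by linarith
    then show ?thesis using j(2) by (intro exI[of _ j] conjI)
  qed
  fix i j assume ij: "i < j" "j < sixlen f v"
  show "(f^^i) v \<noteq> (f^^j) v"
  proof
    assume "(f^^i) v = (f^^j) v"
    moreover have "i \<le> j - 1" using ij by simp
    ultimately have "(f^^j) v \<in> {(f ^^ l) v | l. l \<le> j - 1}"
      unfolding mem_Collect_eq by (intro exI[of _ i] conjI) simp_all
    then have "?P j" using ij by auto
    moreover have "\<not> ?P j" using ij(2) unfolding sixlen_def by (rule not_less_Least)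
    ultimately show False by contradiction
  qed
qed

lemma tail0:
  assumes "f ` {1..n} \<subseteq> {1..n}" "v \<in> {1..(n::nat)}"
  shows "taillen f v = 0 \<longleftrightarrow> (f^^sixlen f v) v = v"
proof -
  note P = six_props[OF assms]
  obtain t0 where t0: "t0 < sixlen f v" "(f^^sixlen f v) v = (f^^t0) v" using P(3) by blast
  have uniq: "t = t0" if "t < sixlen f v \<and> (f^^sixlen f v) v = (f^^t) v" for t
  proof (rule ccontr)
    assume "t \<noteq> t0"
    then consider "t < t0" | "t0 < t" by linarith
    then show False
    proof cases
      case 1
      have "(f^^t) v \<noteq> (f^^t0) v" by (rule P(4)[OF 1 t0(1)])
      then show False using that t0(2) by simp
    next
      case 2
      have "(f^^t0) v \<noteq> (f^^t) v" by (rule P(4)[OF 2 conjunct1[OF that]])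
      then show False using that t0(2) by simp
    qed
  qed
  have "taillen f v = t0" unfolding taillen_def
    by (rule the_equality) (intro conjI t0, rule uniq)
  moreover have "t0 = 0" if "(f^^sixlen f v) v = v"
  proof -
    have "0 < sixlen f v" using P(1) by simp
    then show ?thesis using uniq[of 0] that by simp
  qed
  ultimately show ?thesis using t0 by auto
qed

lemma six_ge:
  assumes "f ` {1..n} \<subseteq> {1..n}" "v \<in> {1..(n::nat)}"
    "\<And>i j. i<j \<Longrightarrow> j<k \<Longrightarrow> (f^^i) v \<noteq> (f^^j) v"
  shows "k \<le> sixlen f v"
proof (rule ccontr)
  assume "\<not> k \<le> sixlen f v"
  then have sk: "sixlen f v < k" by simp
  obtain j where j: "j<sixlen f v" "(f^^sixlen f v) v = (f^^j) v" using six_props(3)[OF assms(1,2)] by blast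
  show False using assms(3)[OF j(1) sk] j(2) by simp
qed



lemma sw_in: "a\<in>A \<Longrightarrow> b\<in>A \<Longrightarrow> x\<in>A \<Longrightarrow> sw a b x \<in> A" by (auto simp: sw_def)
lemma sw_out: "x \<noteq> a \<Longrightarrow> x \<noteq> b \<Longrightarrow> sw a b x = x" by (auto simp: sw_def)

lemma fdeg_PiE: "f \<in> fdeg n d \<Longrightarrow> f \<in> {1..n} \<rightarrow>\<^sub>E {1..n}"
  unfolding fdeg_def by (drule CollectD, erule conjunct1)

lemma fdeg_map: "f \<in> fdeg n d \<Longrightarrow> f ` {1..n} \<subseteq> {1..n}"
  by (rule image_subsetI, erule PiE_mem[OF fdeg_PiE])

lemma fdeg_finite: "finite (fdeg n d)"
proof -
  have "fdeg n d \<subseteq> {1..n} \<rightarrow>\<^sub>E {1..n}" by (rule subsetI, erule fdeg_PiE)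
  moreover have "finite ({1..n} \<rightarrow>\<^sub>E {1..n::nat})" by (rule finite_PiE) simp_all
  ultimately show ?thesis by (rule finite_subset)
qed

lemma fdeg_deg: "f \<in> fdeg n d \<Longrightarrow> i \<in> {1..n} \<Longrightarrow> card {j\<in>{1..n}. f j = i} = d i"
  unfolding fdeg_def by (drule CollectD, drule conjunct2, erule bspec)

lemma fdeg_swap:
  assumes f: "f \<in> fdeg n d" and a: "a \<in> {1..n}" and b: "b \<in> {1..n}"
  shows "f \<circ> sw a b \<in> fdeg n d"
proof -
  have fP: "f \<in> {1..n} \<rightarrow>\<^sub>E {1..n}" using f by (rule fdeg_PiE)
  have PI: "f \<circ> sw a b \<in> {1..n} \<rightarrow>\<^sub>E {1..n}"
  proof (rule PiE_I)
    fix x assume x: "x \<in> {1..n}"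
    have "sw a b x \<in> {1..n}" by (rule sw_in[OF a b x])
    then show "(f \<circ> sw a b) x \<in> {1..n}" unfolding comp_apply by (rule PiE_mem[OF fP])
  next
    fix x assume x: "x \<notin> {1..n}"
    then have "x \<noteq> a" "x \<noteq> b" using a b by auto
    then have "sw a b x = x" by (rule sw_out)
    moreover have "f x = undefined" by (rule PiE_arb[OF fP x])
    ultimately show "(f \<circ> sw a b) x = undefined" by simp
  qed
  have CI: "card {j\<in>{1..n}. (f \<circ> sw a b) j = i} = d i" if i: "i \<in> {1..n}" for i
  proof -
    have seteq: "{j\<in>{1..n}. (f \<circ> sw a b) j = i} = sw a b ` {j\<in>{1..n}. f j = i}"
    proof (intro equalityI subsetI)
      fix x assume x: "x \<in> {j\<in>{1..n}. (f \<circ> sw a b) j = i}"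
      then have xn: "x \<in> {1..n}" and fx: "f (sw a b x) = i" by simp_all
      have "sw a b x \<in> {1..n}" by (rule sw_in[OF a b xn])
      then have mem: "sw a b x \<in> {j\<in>{1..n}. f j = i}" using fx by simp
      show "x \<in> sw a b ` {j\<in>{1..n}. f j = i}"
        by (rule image_eqI[where x="sw a b x", OF _ mem]) simp
    next
      fix y assume "y \<in> sw a b ` {j\<in>{1..n}. f j = i}"
      then obtain z where z: "z \<in> {1..n}" "f z = i" "y = sw a b z" by auto
      have "y \<in> {1..n}" using sw_in[OF a b z(1)] z(3) by simp
      moreover have "(f \<circ> sw a b) y = i" using z(2,3) by simp
      ultimately show "y \<in> {j\<in>{1..n}. (f \<circ> sw a b) j = i}" by simp
    qed
    have "card {j\<in>{1..n}. (f \<circ> sw a b) j = i} = card (sw a b ` {j\<in>{1..n}. f j = i})"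
      by (simp only: seteq)
    also have "card (sw a b ` {j\<in>{1..n}. f j = i}) = card {j\<in>{1..n}. f j = i}"
      by (rule card_image[OF inj_on_subset[OF inj_sw subset_UNIV]])
    also have "\<dots> = d i" by (rule fdeg_deg[OF f i])
    finally show ?thesis .
  qed
  show ?thesis unfolding fdeg_def by (rule CollectI, rule conjI[OF PI], rule ballI, erule CI)
qed

lemma switch:
  assumes k: "1 \<le> k" "k \<le> n" and v: "v \<in> {1..n}"
  shows "(n - (k-1)) * card {f\<in>fdeg n d. sixlen f v = k \<and> taillen f v = 0}
          \<le> d v * card {g\<in>fdeg n d. k \<le> sixlen g v}"
proof -
  define B where "B = {f\<in>fdeg n d. sixlen f v = k \<and> taillen f v = 0}"
  define A where "A = {g\<in>fdeg n d. k \<le> sixlen g v}"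
  define J where "J f = {1..n} - (\<lambda>i. (f^^i) v) ` {..<k-1}" for f :: "nat \<Rightarrow> nat"
  define U where "U f = (f^^(k-1)) v" for f :: "nat \<Rightarrow> nat"
  define \<Phi> where "\<Phi> p = (fst p \<circ> sw (U (fst p)) (snd p), snd p)" for p :: "(nat \<Rightarrow> nat) \<times> nat"
  define D where "D = Sigma B J"
  define E where "E = Sigma A (\<lambda>g. {j\<in>{1..n}. g j = v})"
  have Bmem: "f \<in> B \<longleftrightarrow> f \<in> fdeg n d \<and> sixlen f v = k \<and> taillen f v = 0" for f
    by (simp only: B_def mem_Collect_eq)
  have Amem: "g \<in> A \<longleftrightarrow> g \<in> fdeg n d \<and> k \<le> sixlen g v" for g
    by (simp only: A_def mem_Collect_eq)
  have finB: "finite B" by (rule finite_subset[OF _ fdeg_finite]) (simp only: B_def, rule Collect_restrict)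
  have finA: "finite A" by (rule finite_subset[OF _ fdeg_finite]) (simp only: A_def, rule Collect_restrict)
  have cardJ: "card (J f) = n - (k-1)" if f: "f \<in> B" for f
  proof -
    have fF: "f \<in> fdeg n d" and sk: "sixlen f v = k" using f unfolding Bmem by simp_all
    have fm: "f ` {1..n} \<subseteq> {1..n}" by (rule fdeg_map[OF fF])
    have dist: "(f^^i) v \<noteq> (f^^j) v" if "i<j" "j<k" for i j
      by (rule six_props(4)[OF fm v that(1)]) (simp only: sk that(2))
    have inj: "inj_on (\<lambda>i. (f^^i) v) {..<k-1}"
    proof (rule inj_onI)
      fix i j assume ij: "i \<in> {..<k-1}" "j \<in> {..<k-1}" "(f^^i) v = (f^^j) v"
      have "i < k" "j < k" using ij(1,2) by simp_all
      show "i = j"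
      proof (rule ccontr)
        assume "i \<noteq> j"
        then consider "i < j" | "j < i" by linarith
        then show False
        proof cases
          case 1 then show False using dist[OF 1 \<open>j < k\<close>] ij(3) by simp
        next
          case 2 then show False using dist[OF 2 \<open>i < k\<close>] ij(3) by simp
        qed
      qed
    qed
    have sub: "(\<lambda>i. (f^^i) v) ` {..<k-1} \<subseteq> {1..n}"
      by (rule image_subsetI, rule iter_in[OF fm v])
    have "card (J f) = card {1..n} - card ((\<lambda>i. (f^^i) v) ` {..<k-1})"
      unfolding J_def by (rule card_Diff_subset[OF finite_subset[OF sub finite_atLeastAtMost] sub])
    also have "card ((\<lambda>i. (f^^i) v) ` {..<k-1}) = k - 1" using card_image[OF inj] by simp
    finally show ?thesis by simp
  qed
  have cardD: "card D = (n - (k-1)) * card B"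
  proof -
    have "card D = (\<Sum>f\<in>B. card (J f))" unfolding D_def by (rule card_SigmaI[OF finB]) (simp add: J_def)
    also have "\<dots> = (\<Sum>f\<in>B. n - (k-1))" using cardJ by (rule sum.cong[OF refl])
    finally show ?thesis by simp
  qed
  have cardE: "card E = d v * card A"
  proof -
    have "card E = (\<Sum>g\<in>A. card {j\<in>{1..n}. g j = v})"
      unfolding E_def by (rule card_SigmaI[OF finA]) simp
    also have "\<dots> = (\<Sum>g\<in>A. d v)"
    proof (rule sum.cong[OF refl])
      fix g assume "g \<in> A"
      then have "g \<in> fdeg n d" unfolding Amem by simp
      then show "card {j\<in>{1..n}. g j = v} = d v" by (rule fdeg_deg[OF _ v])
    qed
    finally show ?thesis by simp
  qed
  have finE: "finite E" unfolding E_def by (rule finite_SigmaI[OF finA]) simp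
  have path: "((fst p \<circ> sw (U (fst p)) (snd p))^^i) v = (fst p^^i) v" "fst (\<Phi> p) \<in> A" "fst (\<Phi> p) (snd p) = v"
    if p: "p \<in> D" and i: "i \<le> k-1" for p i
  proof -
    obtain f j where fj: "p = (f, j)" "f \<in> B" "j \<in> J f" using p unfolding D_def by auto
    have fF: "f \<in> fdeg n d" using fj unfolding B_def by auto
    have fm: "f ` {1..n} \<subseteq> {1..n}" using fdeg_map[OF fF] .
    have sk: "sixlen f v = k" and t0: "taillen f v = 0" using fj unfolding B_def by auto
    have dist: "(f^^i) v \<noteq> (f^^j) v" if "i<j" "j<k" for i j
      using six_props(4)[OF fm v] that sk by auto
    have fk: "(f^^k) v = v" using tail0[OF fm v] t0 sk by simp
    have fu: "f (U f) = v" using fk k unfolding U_def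
      by (metis Suc_diff_le comp_apply diff_Suc_1 funpow.simps(2))
    have uin: "U f \<in> {1..n}" unfolding U_def using iter_in[OF fm v] by blast
    have jin: "j \<in> {1..n}" and jnot: "\<And>i. i < k-1 \<Longrightarrow> j \<noteq> (f^^i) v" using fj unfolding J_def by auto
    define g where "g = f \<circ> sw (U f) j"
    have gpath: "(g^^i) v = (f^^i) v" if "i \<le> k-1" for i
      using that
    proof (induction i)
      case 0 then show ?case by simp
    next
      case (Suc i)
      then have il: "i < k-1" by simp
      have "(f^^i) v \<noteq> U f" unfolding U_def using dist[of i "k-1"] il k by auto
      moreover have "(f^^i) v \<noteq> j" using jnot il by metis
      ultimately show ?case using Suc by (simp add: g_def sw_out)
    qed
    show "((fst p \<circ> sw (U (fst p)) (snd p))^^i) v = (fst p^^i) v" using gpath i fj g_def by simp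
    have gF: "g \<in> fdeg n d" unfolding g_def by (rule fdeg_swap[OF fF uin jin])
    have gm: "g ` {1..n} \<subseteq> {1..n}" using fdeg_map[OF gF] .
    have "k \<le> sixlen g v"
    proof (rule six_ge[OF gm v])
      fix a b assume ab: "a < b" "b < k"
      then show "(g^^a) v \<noteq> (g^^b) v" using gpath[of a] gpath[of b] dist[OF ab] by simp
    qed
    then show "fst (\<Phi> p) \<in> A" using gF unfolding A_def \<Phi>_def fj g_def by simp
    show "fst (\<Phi> p) (snd p) = v" unfolding \<Phi>_def fj using fu by simp
  qed
  have "\<Phi> ` D \<subseteq> E"
  proof
    fix q assume "q \<in> \<Phi> ` D"
    then obtain p where p: "p \<in> D" "q = \<Phi> p" by auto
    have "snd p \<in> {1..n}" using p unfolding D_def J_def by auto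
    then show "q \<in> E" using path(2,3)[OF p(1), of 0] p unfolding E_def \<Phi>_def by auto
  qed
  moreover have "inj_on \<Phi> D"
  proof (rule inj_onI)
    fix p p' assume pp: "p \<in> D" "p' \<in> D" "\<Phi> p = \<Phi> p'"
    have j: "snd p = snd p'" using pp unfolding \<Phi>_def by (simp add: prod_eq_iff)
    have g: "fst p \<circ> sw (U (fst p)) (snd p) = fst p' \<circ> sw (U (fst p')) (snd p')"
      using arg_cong[OF pp(3), of fst] unfolding \<Phi>_def fst_conv .
    have "U (fst p) = U (fst p')"
      using path(1)[OF pp(1) order_refl] path(1)[OF pp(2) order_refl] g unfolding U_def by simp
    then have "fst p = fst p'"
      using g j by (metis comp_apply ext sw_inv)
    then show "p = p'" using j by (simp add: prod_eq_iff)
  qed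
  ultimately have "card D \<le> card E" using card_inj_on_le finE by blast
  then show ?thesis using cardD cardE unfolding A_def B_def by simp
qed



lemma sum_ind: "finite X \<Longrightarrow> (\<Sum>x\<in>X. if P x then 1 else (0::real)) = real (card {x\<in>X. P x})"
  by (simp add: sum.inter_filter[symmetric])

lemma aux2: "0 \<le> (y::real) \<Longrightarrow> 2 * x + y \<le> 2 * (x + y)" by (simp add: distrib_left)

theorem lemma3p13:
  "\<exists>C::real. C > 0 \<and>
    (\<forall>(n::nat) (d::nat \<Rightarrow> nat) (v::nat).
      (\<Sum>j\<in>{1..n}. d j) = n \<longrightarrow> v \<in> {1..n} \<longrightarrow>
      probF n d (\<lambda>f. taillen f v = 0)
        \<le> C * (real (d v) * expF n d (\<lambda>f. real (sixlen f v)) / real n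
               + real (d v) * real n * probF n d (\<lambda>f. real (sixlen f v) > real n / 2)))"
proof (rule exI[of _ 2], intro conjI allI impI)
  show "(0::real) < 2" by simp
  fix n :: nat and d v assume "(\<Sum>j\<in>{1..n}. d j) = n" and v: "v \<in> {1..n}"
  define F where "F = fdeg n d"
  define B where "B k = {f\<in>F. sixlen f v = k \<and> taillen f v = 0}" for k
  define A where "A k = {f\<in>F. k \<le> sixlen f v}" for k
  define S where "S = {f\<in>F. real (sixlen f v) > real n / 2}"
  define T where "T = {f\<in>F. taillen f v = 0}"
  define N where "N = card F"
  have finF: "finite F" unfolding F_def by (rule fdeg_finite)
  have fm: "f ` {1..n} \<subseteq> {1..n}" if "f \<in> F" for f using that fdeg_map[of f n d] unfolding F_def by blast
  have n1: "n \<ge> 1" using v by auto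
  have T_eq: "T = (\<Union>k\<in>{1..n}. B k)"
  proof (intro equalityI subsetI)
    fix f assume "f \<in> T"
    then have fF: "f \<in> F" "taillen f v = 0" by (simp_all add: T_def)
    have "sixlen f v \<in> {1..n}" using six_props(1,2)[OF fm[OF fF(1)] v] by simp
    moreover have "f \<in> B (sixlen f v)" using fF by (simp add: B_def)
    ultimately show "f \<in> (\<Union>k\<in>{1..n}. B k)" by blast
  next
    fix f assume "f \<in> (\<Union>k\<in>{1..n}. B k)"
    then obtain k where "f \<in> B k" by blast
    then show "f \<in> T" by (simp add: B_def T_def)
  qed
  have finBk: "finite (B k)" for k unfolding B_def by (rule finite_subset[OF Collect_restrict finF])
  have disj: "\<forall>i\<in>{1..n}. \<forall>j\<in>{1..n}. i \<noteq> j \<longrightarrow> B i \<inter> B j = {}" unfolding B_def by blast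
  have cT: "card T = (\<Sum>k\<in>{1..n}. card (B k))"
    unfolding T_eq by (rule card_UN_disjoint[OF finite_atLeastAtMost _ disj]) (simp add: finBk)
  have sumS: "(\<Sum>f\<in>F. real (sixlen f v)) = (\<Sum>k\<in>{1..n}. real (card (A k)))"
  proof -
    have "(\<Sum>f\<in>F. real (sixlen f v)) = (\<Sum>f\<in>F. \<Sum>k\<in>{1..n}. if k \<le> sixlen f v then 1 else (0::real))"
    proof (rule sum.cong[OF refl])
      fix f assume f: "f \<in> F"
      have e1: "(\<Sum>k\<in>{1..n}. if k \<le> sixlen f v then 1 else (0::real)) = real (card {k\<in>{1..n}. k \<le> sixlen f v})"
        by (rule sum_ind) simp
      have le: "sixlen f v \<le> n" by (rule six_props(2)[OF fm[OF f] v])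
      have e2: "{k\<in>{1..n}. k \<le> sixlen f v} = {1..sixlen f v}" using le by auto
      show "real (sixlen f v) = (\<Sum>k\<in>{1..n}. if k \<le> sixlen f v then 1 else (0::real))"
        unfolding e1 e2 by simp
    qed
    also have "\<dots> = (\<Sum>k\<in>{1..n}. \<Sum>f\<in>F. if k \<le> sixlen f v then 1 else (0::real))" by (rule sum.swap)
    also have "\<dots> = (\<Sum>k\<in>{1..n}. real (card (A k)))"
      unfolding A_def by (rule sum.cong[OF refl], rule sum_ind[OF finF])
    finally show ?thesis .
  qed
  have finS: "finite S" unfolding S_def by (rule finite_subset[OF Collect_restrict finF])
  have bnd: "real (card (B k)) \<le> 2 * real (d v) * real (card (A k)) / real n + real (d v) * real (card S)"
    if k: "k \<in> {1..n}" for k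
  proof -
    have k1: "1 \<le> k" and kn: "k \<le> n" using k by simp_all
    have s0: "(n - (k-1)) * card (B k) \<le> d v * card (A k)"
      unfolding A_def B_def F_def by (rule switch[OF k1 kn v])
    have sw: "real (n - (k-1)) * real (card (B k)) \<le> real (d v) * real (card (A k))"
      unfolding of_nat_mult[symmetric] of_nat_le_iff by (rule s0)
    have B0: "0 \<le> real (card (B k))" by simp
    show ?thesis
    proof (cases "2*k \<le> n")
      case True
      have "n \<le> 2 * (n - (k-1))" using True k1 by simp
      then have "real n \<le> real (2 * (n - (k-1)))" by (simp only: of_nat_le_iff)
      then have r1: "real n \<le> 2 * real (n - (k-1))" by simp
      have "real (card (B k)) * real n \<le> real (card (B k)) * (2 * real (n - (k-1)))"
        by (rule mult_left_mono[OF r1 B0])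
      also have "\<dots> = 2 * (real (n - (k-1)) * real (card (B k)))" by simp
      also have "\<dots> \<le> 2 * (real (d v) * real (card (A k)))"
        by (rule mult_left_mono[OF sw]) simp
      also have "\<dots> = 2 * real (d v) * real (card (A k))" by simp
      finally have r2: "real (card (B k)) * real n \<le> 2 * real (d v) * real (card (A k))" .
      have npos: "0 < real n" using n1 by simp
      have "real (card (B k)) \<le> 2 * real (d v) * real (card (A k)) / real n"
        using r2 by (simp only: pos_le_divide_eq[OF npos])
      moreover have "0 \<le> real (d v) * real (card S)" by simp
      ultimately show ?thesis by linarith
    next
      case False
      have "A k \<subseteq> S"
      proof
        fix f assume "f \<in> A k"
        then have fF: "f \<in> F" and ks: "k \<le> sixlen f v" by (simp_all add: A_def)
        have "n < 2 * sixlen f v" using False ks by simp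
        then have "real n < real (2 * sixlen f v)" by (simp only: of_nat_less_iff)
        then have "real (sixlen f v) > real n / 2" by simp
        then show "f \<in> S" using fF by (simp add: S_def)
      qed
      then have "card (A k) \<le> card S" by (rule card_mono[OF finS])
      then have "real (card (A k)) \<le> real (card S)" by (simp only: of_nat_le_iff)
      then have c1: "real (d v) * real (card (A k)) \<le> real (d v) * real (card S)"
        by (rule mult_left_mono) simp
      have "1 \<le> n - (k-1)" using kn k1 by simp
      then have "(1::real) \<le> real (n - (k-1))" by (metis of_nat_1 of_nat_le_iff)
      then have "1 * real (card (B k)) \<le> real (n - (k-1)) * real (card (B k))"
        by (rule mult_right_mono[OF _ B0])
      then have c2: "real (card (B k)) \<le> real (n - (k-1)) * real (card (B k))" by simp
      have c3: "0 \<le> 2 * real (d v) * real (card (A k)) / real n" by simp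
      from c1 c2 c3 sw show ?thesis by linarith
    qed
  qed
  have "real (card T) \<le> (\<Sum>k\<in>{1..n}. 2 * real (d v) * real (card (A k)) / real n + real (d v) * real (card S))"
    unfolding cT of_nat_sum by (rule sum_mono) (rule bnd)
  also have "\<dots> = 2 * real (d v) * (\<Sum>f\<in>F. real (sixlen f v)) / real n + real n * real (d v) * real (card S)"
    unfolding sumS by (simp add: sum.distrib sum_divide_distrib[symmetric] sum_distrib_left[symmetric])
  finally have main: "real (card T) \<le> 2 * real (d v) * (\<Sum>f\<in>F. real (sixlen f v)) / real n + real n * real (d v) * real (card S)" .
  have pT: "probF n d (\<lambda>f. taillen f v = 0) = real (card T) / real N"
    unfolding probF_def T_def N_def F_def by (rule refl)
  have pE: "expF n d (\<lambda>f. real (sixlen f v)) = (\<Sum>f\<in>F. real (sixlen f v)) / real N"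
    unfolding expF_def F_def N_def by (rule refl)
  have pS: "probF n d (\<lambda>f. real (sixlen f v) > real n / 2) = real (card S) / real N"
    unfolding probF_def S_def F_def N_def by (rule refl)
  have goal: "real (card T) / real N \<le> 2 * (real (d v) * ((\<Sum>f\<in>F. real (sixlen f v)) / real N) / real n
               + real (d v) * real n * (real (card S) / real N))"
  proof (cases "N = 0")
    case True then show ?thesis by simp
  next
    case False
    define a where "a = (\<Sum>f\<in>F. real (sixlen f v))"
    define c where "c = real (card S)"
    have Np: "0 < real N" using False by simp
    have np: "0 < real n" using n1 by simp
    have "real (card T) / real N \<le> (2 * real (d v) * a / real n + real n * real (d v) * c) / real N"
      unfolding a_def c_def by (rule divide_right_mono[OF main]) simp
    also have "\<dots> = 2 * (real (d v) * (a / real N) / real n) + real (d v) * real n * (c / real N)"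
      using Np np by (simp add: field_simps)
    also have "\<dots> \<le> 2 * (real (d v) * (a / real N) / real n + real (d v) * real n * (c / real N))"
    proof -
      have "0 \<le> real (d v) * real n * (c / real N)" unfolding c_def by simp
      then show ?thesis by (rule aux2)
    qed
    finally show ?thesis unfolding a_def c_def .
  qed
  then show "probF n d (\<lambda>f. taillen f v = 0) \<le> 2 * (real (d v) * expF n d (\<lambda>f. real (sixlen f v)) / real n
               + real (d v) * real n * probF n d (\<lambda>f. real (sixlen f v) > real n / 2))"
    unfolding pT pE pS .
qed

end
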